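(* Let $1\le p<2$, $f\in\mathcal H_0$, and let $u$ solve $\partial_tu+\partial J(u)\ni0$, $u(0)=f$, with extinction time $T_{\mathrm{ex}}$. Then for $0<t<T_{\mathrm{ex}}$, $$(2-p)\lambda_1(T_{\mathrm{ex}}-t)\le\|u(t)\|^{2-p}\le(2-p)\Lambda(t)(T_{\mathrm{ex}}-t).$$
   Context: $\mathcal H$ is a real Hilbert space with inner product $\langle\cdot,\cdot\rangle$ and norm $\|\cdot\|$. $J:\mathcal H\to\mathbb R\cup\{\infty\}$ is convex, lower semicontinuous, proper, with dense effective domain, and absolutely $p$-homogeneous: $J(cu)=|c|^pJ(u)$ for $c\ne0$, $J(0)=0$. Standing coercivity assumption: $\lambda_1:=\inf_{u\in\mathcal H_0}pJ(u)/\|u\|^p>0$. $\partial J(u)=\{\zeta: J(u)+\langle\zeta,v-u\rangle\le J(v)\ \forall v\}$; $\mathcal N(J)=\{u:J(u)=0\}$; $\mathcal H_0:=\mathcal N(J)^\perp\setminus\{0\}$. The gradient flow solution (Brezis) is the unique continuous $u:[0,\infty)\to\mathcal H$, Lipschitz on $[\delta,\infty)$ for all $\delta>0$, right-differentiable on $(0,\infty)$ with $u(0)=f$ and $\partial_t^+u(t)=-\zeta(t)$, $\zeta(t)$ the minimal-norm element of $\partial J(u(t))$. $T_{\mathrm{ex}}:=\inf\{T>0:u(t)=0\ \forall t\ge T\}$ (finite for $p<2$). $\Lambda(t):=pJ(u(t))/\|u(t)\|^p$ for $0<t<T_{\mathrm{ex}}$. *)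

theory Defs
  imports "HOL-Analysis.Analysis" "HOL-Library.Extended_Real"
begin

definition convex_fun :: "('a::real_vector \<Rightarrow> ereal) \<Rightarrow> bool" where
  "convex_fun J \<longleftrightarrow> (\<forall>x y. \<forall>a::real. 0 \<le> a \<and> a \<le> 1 \<longrightarrow>
      J ((1 - a) *\<^sub>R x + a *\<^sub>R y) \<le> ereal (1 - a) * J x + ereal a * J y)"

definition lsc_fun :: "('a::topological_space \<Rightarrow> ereal) \<Rightarrow> bool" where
  "lsc_fun J \<longleftrightarrow> (\<forall>c::ereal. closed {x. J x \<le> c})"

definition proper_fun :: "('a \<Rightarrow> ereal) \<Rightarrow> bool" where
  "proper_fun J \<longleftrightarrow> (\<forall>x. J x \<noteq> -\<infinity>) \<and> (\<exists>x. J x \<noteq> \<infinity>)"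

definition eff_dom :: "('a \<Rightarrow> ereal) \<Rightarrow> 'a set" where
  "eff_dom J = {x. J x < \<infinity>}"

definition abs_homogeneous :: "real \<Rightarrow> ('a::real_vector \<Rightarrow> ereal) \<Rightarrow> bool" where
  "abs_homogeneous p J \<longleftrightarrow> J 0 = 0 \<and>
     (\<forall>c u. c \<noteq> 0 \<longrightarrow> J (c *\<^sub>R u) = ereal (\<bar>c\<bar> powr p) * J u)"

definition nullspace :: "('a \<Rightarrow> ereal) \<Rightarrow> 'a set" where
  "nullspace J = {u. J u = 0}"

definition H0 :: "('a::real_inner \<Rightarrow> ereal) \<Rightarrow> 'a set" where
  "H0 J = {u. u \<noteq> 0 \<and> (\<forall>w \<in> nullspace J. inner u w = 0)}"

definition subdiff :: "('a::real_inner \<Rightarrow> ereal) \<Rightarrow> 'a \<Rightarrow> 'a set" where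
  "subdiff J u = {\<zeta>. \<forall>v. J u + ereal (inner \<zeta> (v - u)) \<le> J v}"

definition lambda1 :: "real \<Rightarrow> ('a::real_inner \<Rightarrow> ereal) \<Rightarrow> ereal" where
  "lambda1 p J = (INF u \<in> H0 J. ereal p * J u / ereal (norm u powr p))"

text \<open>Brezis gradient flow solution of \<open>\<partial>\<^sub>t u + \<partial>J(u) \<ni> 0\<close>, \<open>u(0) = f\<close>;
  only the restriction of \<open>u\<close> to \<open>[0,\<infinity>)\<close> is relevant.\<close>
definition gradient_flow :: "('a::real_inner \<Rightarrow> ereal) \<Rightarrow> 'a \<Rightarrow> (real \<Rightarrow> 'a) \<Rightarrow> bool" where
  "gradient_flow J f u \<longleftrightarrow>
     continuous_on {0..} u \<and>
     (\<forall>\<delta>>0. \<exists>L. L-lipschitz_on {\<delta>..} u) \<and>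
     u 0 = f \<and>
     (\<forall>t>0. \<exists>\<zeta>. \<zeta> \<in> subdiff J (u t) \<and> (\<forall>z \<in> subdiff J (u t). norm \<zeta> \<le> norm z) \<and>
              (u has_vector_derivative (- \<zeta>)) (at t within {t..}))"

definition extinction_times :: "(real \<Rightarrow> 'a::zero) \<Rightarrow> real set" where
  "extinction_times u = {T. T > 0 \<and> (\<forall>t\<ge>T. u t = 0)}"

definition T_ex :: "(real \<Rightarrow> 'a::zero) \<Rightarrow> real" where
  "T_ex u = Inf (extinction_times u)"

definition Rayleigh :: "real \<Rightarrow> ('a::real_normed_vector \<Rightarrow> ereal) \<Rightarrow> (real \<Rightarrow> 'a) \<Rightarrow> real \<Rightarrow> ereal" where
  "Rayleigh p J u t = ereal p * J (u t) / ereal (norm (u t) powr p)"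

end

theory Submission
  imports Defs
begin

lemma dini_core:
  fixes g :: "real \<Rightarrow> real"
  assumes ab: "a \<le> b" and cont: "continuous_on {a..b} g"
    and fr: "\<And>x e. x \<in> {a..<b} \<Longrightarrow> e > 0 \<Longrightarrow> frequently (\<lambda>y. g y \<le> g x + e*(y-x)) (at_right x)"
  shows "g b \<le> g a"
proof -
  have key: "g b \<le> g a + e*(b-a)" if e: "e>0" for e
  proof -
    define S where "S = {x\<in>{a..b}. g x \<le> g a + e*(x-a)}"
    have cl: "closed S" unfolding S_def
      by (intro continuous_on_closed_Collect_le cont continuous_intros)
    have ne: "a \<in> S" using ab by (simp add: S_def)
    have bdd: "bdd_above S" unfolding bdd_above_def S_def by auto
    define c where "c = Sup S"
    have cS: "c \<in> S" using closed_contains_Sup[of S] ne bdd cl by (auto simp: c_def)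
    have "c = b"
    proof (rule ccontr)
      assume "c \<noteq> b"
      with cS have cb: "c < b" "a \<le> c" by (auto simp: S_def)
      have "frequently (\<lambda>y. g y \<le> g c + e*(y-c)) (at_right c)" using fr cb e by auto
      moreover have "eventually (\<lambda>y. c < y \<and> y < b) (at_right c)"
        unfolding eventually_at_right[OF cb(1)] using cb by auto
      ultimately have "frequently (\<lambda>y. (g y \<le> g c + e*(y-c)) \<and> (c < y \<and> y < b)) (at_right c)"
        by (rule frequently_eventually_frequently)
      then obtain y where y: "c<y" "y<b" "g y \<le> g c + e*(y-c)"
        using frequently_ex by blast
      have "y \<in> S" using cS y cb unfolding S_def by (auto simp: algebra_simps)
      then have "y \<le> c" using bdd by (simp add: c_def cSup_upper)
      then show False using y by simp
    qed
    then show ?thesis using cS S_def by auto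
  qed
  show ?thesis
  proof (cases "a = b")
    case True then show ?thesis by simp
  next
    case False
    then have "b - a > 0" using ab by simp
    show ?thesis
    proof (rule field_le_epsilon)
      fix e :: real assume "0 < e"
      with \<open>b - a > 0\<close> have "g b \<le> g a + (e/(b-a))*(b-a)" by (intro key) auto
      then show "g b \<le> g a + e" using \<open>b - a > 0\<close> by simp
    qed
  qed
qed

lemma dini_open:
  fixes g :: "real \<Rightarrow> real"
  assumes ab: "a \<le> b" and cont: "continuous_on {a..b} g"
    and fr: "\<And>x e. x \<in> {a<..<b} \<Longrightarrow> e > 0 \<Longrightarrow> frequently (\<lambda>y. g y \<le> g x + e*(y-x)) (at_right x)"
  shows "g b \<le> g a"
proof (cases "a = b")
  case True then show ?thesis by simp
next
  case False
  then have ab': "a < b" using ab by simp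
  have inner: "g b \<le> g x" if "a < x" "x \<le> b" for x
    using that by (intro dini_core[of x b g] continuous_on_subset[OF cont] fr) auto
  have lim: "(g \<longlongrightarrow> g a) (at_right a)"
    using cont ab' unfolding continuous_on_def
    by (metis at_within_Icc_at_right atLeastAtMost_iff order_refl ab)
  have ev: "eventually (\<lambda>x. g b \<le> g x) (at_right a)"
    unfolding eventually_at_right[OF ab'] using inner ab' by (intro exI[of _ b]) auto
  show ?thesis
    by (rule tendsto_lowerbound[OF lim ev]) simp
qed

lemma dini_deriv:
  fixes g :: "real \<Rightarrow> real"
  assumes ab: "a \<le> b" and cont: "continuous_on {a..b} g"
    and d: "\<And>x. x \<in> {a<..<b} \<Longrightarrow> \<exists>D\<le>0. (g has_real_derivative D) (at x within {x..})"
  shows "g b \<le> g a"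
proof (rule dini_open[OF ab cont])
  fix x e :: real assume x: "x \<in> {a<..<b}" and e: "e > 0"
  obtain D where D: "D \<le> 0" "(g has_real_derivative D) (at x within {x..})" using d x by blast
  have "((\<lambda>y. (g y - g x)/(y-x)) \<longlongrightarrow> D) (at_right x)"
    using D(2) unfolding has_field_derivative_iff at_within_Ici_at_right .
  then have "eventually (\<lambda>y. (g y - g x)/(y-x) < D + e) (at_right x)"
    using e by (intro order_tendstoD(2)) auto
  moreover have "eventually (\<lambda>y. x < y) (at_right x)" by (simp add: eventually_at_right_less)
  ultimately have "eventually (\<lambda>y. g y \<le> g x + e*(y-x)) (at_right x)"
  proof eventually_elim
    case (elim y)
    then have "(g y - g x) < (D+e)*(y-x)" by (simp add: divide_less_eq)
    then show ?case using D(1) elim(2) by (smt (verit, ccfv_SIG) mult_right_mono)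
  qed
  then show "frequently (\<lambda>y. g y \<le> g x + e*(y-x)) (at_right x)"
    by (simp add: eventually_frequently)
qed


locale homJ =
  fixes J :: "'a::real_inner \<Rightarrow> ereal" and p :: real
  assumes p1: "1 \<le> p" and p2: "p < 2" and conv: "convex_fun J" and proper: "proper_fun J"
    and hom: "abs_homogeneous p J"
begin

lemma J0: "J 0 = 0" using hom by (simp add: abs_homogeneous_def)

lemma J_scale: "c \<noteq> 0 \<Longrightarrow> J (c *\<^sub>R u) = ereal (\<bar>c\<bar> powr p) * J u"
  using hom by (simp add: abs_homogeneous_def)

lemma J_neg: "J (- u) = J u"
  using J_scale[of "-1" u] by simp

lemma J_not_minf: "J u \<noteq> -\<infinity>" using proper by (simp add: proper_fun_def)

lemma J_nonneg: "0 \<le> J u"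
proof -
  have "J ((1 - 1/2) *\<^sub>R u + (1/2) *\<^sub>R (-u)) \<le> ereal (1 - 1/2) * J u + ereal (1/2) * J (-u)"
    using conv unfolding convex_fun_def by (metis divide_nonneg_nonneg less_eq_real_def
        zero_less_one zero_le_numeral divide_le_eq_1 one_le_numeral)
  then have "0 \<le> ereal (1/2) * J u + ereal (1/2) * J u"
    by (simp add: J0 J_neg)
  then show ?thesis using J_not_minf[of u]
    by (cases "J u") (auto simp: field_simps)
qed

lemma subdiff_finite:
  assumes "z \<in> subdiff J x" shows "J x = ereal (real_of_ereal (J x))"
proof -
  obtain y where y: "J y \<noteq> \<infinity>" using proper by (auto simp: proper_fun_def)
  have "J x + ereal (inner z (y - x)) \<le> J y" using assms by (simp add: subdiff_def)
  then have "J x \<noteq> \<infinity>" using y by auto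
  then show ?thesis using J_not_minf[of x] by (cases "J x") auto
qed

lemma subgrad_real:
  assumes "z \<in> subdiff J x" "J x = ereal jx" "J y = ereal jy"
  shows "jx + inner z (y - x) \<le> jy"
  using assms by (auto simp: subdiff_def elim!: allE[of _ y])

lemma euler:
  assumes z: "z \<in> subdiff J x" and j: "J x = ereal j"
  shows "inner z x = p * j"
proof -
  have ineq: "j + (c - 1) * inner z x \<le> c powr p * j" if c: "c > 0" for c
  proof -
    have "J (c *\<^sub>R x) = ereal (c powr p * j)" using J_scale[of c x] c j by simp
    moreover have "J x + ereal (inner z (c *\<^sub>R x - x)) \<le> J (c *\<^sub>R x)"
      using z by (simp add: subdiff_def)
    ultimately show ?thesis using j by (simp add: inner_diff_right algebra_simps)
  qed
  have d: "((\<lambda>c. c powr p) has_real_derivative p * 1 powr (p - 1)) (at 1)"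
    by (rule has_real_derivative_powr) simp
  then have lim: "((\<lambda>c. (c powr p - 1) / (c - 1)) \<longlongrightarrow> p) (at 1)"
    unfolding has_field_derivative_iff by simp
  have limr: "((\<lambda>c. (c powr p - 1) / (c - 1) * j) \<longlongrightarrow> p * j) (at_right 1)"
    by (intro tendsto_intros tendsto_mono[OF at_le lim]) simp
  have liml: "((\<lambda>c. (c powr p - 1) / (c - 1) * j) \<longlongrightarrow> p * j) (at_left 1)"
    by (intro tendsto_intros tendsto_mono[OF at_le lim]) simp
  have "inner z x \<le> p * j"
  proof (rule tendsto_lowerbound[OF limr])
    show "\<forall>\<^sub>F c in at_right 1. inner z x \<le> (c powr p - 1) / (c - 1) * j"
      using eventually_at_right_less[of "1::real"]
    proof eventually_elim
      case (elim c)
      then have "j + (c - 1) * inner z x \<le> c powr p * j" using ineq by simp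
      then show ?case using elim by (simp add: field_simps)
    qed
  qed simp
  moreover have "p * j \<le> inner z x"
  proof (rule tendsto_upperbound[OF liml])
    show "\<forall>\<^sub>F c in at_left 1. (c powr p - 1) / (c - 1) * j \<le> inner z x"
      using eventually_at_left_real[of 0 "1::real", OF zero_less_one]
    proof eventually_elim
      case (elim c)
      then have "j + (c - 1) * inner z x \<le> c powr p * j" using ineq by simp
      then show ?case using elim by (simp add: field_simps)
    qed
  qed simp
  ultimately show ?thesis by simp
qed

lemma orth:
  assumes z: "z \<in> subdiff J x" and n: "n \<in> nullspace J"
  shows "inner z n = 0"
proof -
  obtain j where j: "J x = ereal j" using subdiff_finite[OF z] by blast
  have j0: "0 \<le> j" using J_nonneg[of x] j by simp
  have Jn: "J n = 0" using n by (simp add: nullspace_def)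
  have step: "s * inner z n \<le> a / (1 - a) * j" if s: "s \<noteq> 0" and a: "0 < a" "a < 1" for s a
  proof -
    define B where "B = 1 / (1 - a)"
    have B1: "1 \<le> B" using a by (simp add: B_def)
    have eq: "(1 - a) *\<^sub>R (B *\<^sub>R x) + a *\<^sub>R ((s / a) *\<^sub>R n) = x + s *\<^sub>R n"
      using a by (simp add: B_def)
    have "J ((1 - a) *\<^sub>R (B *\<^sub>R x) + a *\<^sub>R ((s / a) *\<^sub>R n))
        \<le> ereal (1 - a) * J (B *\<^sub>R x) + ereal a * J ((s / a) *\<^sub>R n)"
      using conv[unfolded convex_fun_def, rule_format, of a "B *\<^sub>R x" "(s/a) *\<^sub>R n"] a by simp
    also have "J (B *\<^sub>R x) = ereal (B powr p * j)" using J_scale[of B x] B1 j by simp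
    also have "J ((s / a) *\<^sub>R n) = 0" using J_scale[of "s/a" n] s a Jn by simp
    finally have "J (x + s *\<^sub>R n) \<le> ereal ((1 - a) * (B powr p * j))" using eq by simp
    moreover have "J x + ereal (inner z ((x + s *\<^sub>R n) - x)) \<le> J (x + s *\<^sub>R n)"
      using z unfolding subdiff_def by blast
    ultimately have "j + s * inner z n \<le> (1 - a) * (B powr p * j)" using j
      by (smt (verit) ereal_less_eq(3) inner_scaleR_right add_diff_cancel_left' order_trans plus_ereal.simps(1))
    moreover have "(1 - a) * B powr p = B powr (p - 1)"
      using a B1 by (simp add: B_def powr_diff powr_divide field_simps)
    moreover have "B powr (p - 1) \<le> B powr 1" using B1 p2 by (intro powr_mono) auto
    ultimately have "j + s * inner z n \<le> B * j" using B1 j0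
      by (smt (verit, best) mult.assoc mult_right_mono powr_one_gt_zero_iff)
    then show ?thesis using a by (simp add: B_def field_simps)
  qed
  have le0: "s * inner z n \<le> 0" if s: "s \<noteq> 0" for s
  proof (rule field_le_epsilon)
    fix e :: real assume e: "0 < e"
    define a where "a = e / (2 * (e + j))"
    have a: "0 < a" "a < 1" using e j0 by (auto simp: a_def field_simps)
    have "a / (1 - a) * j \<le> e"
    proof (cases "j = 0")
      case False
      have h1: "1 - a = (e + 2*j) / (2*(e+j))" using e j0 unfolding a_def by (simp add: field_simps)
      have nz: "e + j \<noteq> 0" "e + 2*j \<noteq> 0" "1 - a \<noteq> 0" using e j0 a by auto
      have "a * (e + 2*j) = e * (1 - a)" using nz(1) unfolding a_def by (simp add: field_simps)
      then have "a / (1 - a) = e / (e + 2*j)" using nz by (simp add: frac_eq_eq)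
      then have "a / (1 - a) * j = e * j / (e + 2*j)" by simp
      also have "\<dots> \<le> e" using e j0 by (simp add: field_simps)
      finally show ?thesis .
    qed (use e in simp)
    then show "s * inner z n \<le> 0 + e" using step[OF s a] by simp
  qed
  show ?thesis using le0[of 1] le0[of "-1"] by simp
qed

end

locale flowJ = homJ J p for J :: "'a::{real_inner,complete_space} \<Rightarrow> ereal" and p +
  fixes u :: "real \<Rightarrow> 'a" and Z :: "real \<Rightarrow> 'a" and f :: 'a
  assumes lam: "lambda1 p J > 0" and fH: "f \<in> H0 J" and u0: "u 0 = f"
    and ucont: "continuous_on {0..} u"
    and lip: "\<And>\<delta>. \<delta> > 0 \<Longrightarrow> \<exists>L. L-lipschitz_on {\<delta>..} u"
    and Zsub: "\<And>t. t > 0 \<Longrightarrow> Z t \<in> subdiff J (u t)"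
    and Zder: "\<And>t. t > 0 \<Longrightarrow> (u has_vector_derivative (- Z t)) (at t within {t..})"
begin

definition psi :: "real \<Rightarrow> real" where "psi t = real_of_ereal (J (u t))"

lemma J_u: "t > 0 \<Longrightarrow> J (u t) = ereal (psi t)"
  unfolding psi_def using subdiff_finite[OF Zsub] by blast

lemma psi_nonneg: "t > 0 \<Longrightarrow> 0 \<le> psi t"
  using J_nonneg[of "u t"] J_u[of t] by simp

lemma euler_u: "t > 0 \<Longrightarrow> inner (Z t) (u t) = p * psi t"
  using euler[OF Zsub J_u] by blast

lemma ucont_on: "0 \<le> a \<Longrightarrow> continuous_on {a..b} u"
  by (rule continuous_on_subset[OF ucont]) auto

lemma d_inner:
  assumes "t > 0"
  shows "((\<lambda>r. inner (u r) w) has_real_derivative inner (- Z t) w) (at t within {t..})"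
proof -
  have "(u has_derivative (\<lambda>x. x *\<^sub>R (- Z t))) (at t within {t..})"
    using Zder[OF assms] by (simp add: has_vector_derivative_def)
  from has_derivative_inner_left[OF this, of w]
  have "((\<lambda>r. inner (u r) w) has_derivative (\<lambda>x. inner (x *\<^sub>R (- Z t)) w)) (at t within {t..})" .
  moreover have "(\<lambda>x. inner (x *\<^sub>R (- Z t)) w) = (*) (inner (- Z t) w)"
    by (auto simp: fun_eq_iff)
  ultimately show ?thesis by (simp add: has_field_derivative_def)
qed

lemma d_sq:
  assumes "t > 0"
  shows "((\<lambda>r. inner (u r) (u r)) has_real_derivative (- 2 * (p * psi t))) (at t within {t..})"
proof -
  have d: "(u has_derivative (\<lambda>x. x *\<^sub>R (- Z t))) (at t within {t..})"
    using Zder[OF assms] by (simp add: has_vector_derivative_def)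
  from has_derivative_inner[OF d d]
  have "((\<lambda>r. inner (u r) (u r)) has_derivative
     (\<lambda>h. inner (u t) (h *\<^sub>R (- Z t)) + inner (h *\<^sub>R (- Z t)) (u t))) (at t within {t..})" .
  moreover have "(\<lambda>h. inner (u t) (h *\<^sub>R (- Z t)) + inner (h *\<^sub>R (- Z t)) (u t)) = (*) (- 2 * (p * psi t))"
    using euler_u[OF assms] by (auto simp: fun_eq_iff inner_commute)
  ultimately show ?thesis by (simp add: has_field_derivative_def)
qed

lemma d_norm:
  assumes "t > 0" "u t \<noteq> 0"
  shows "((\<lambda>r. norm (u r)) has_real_derivative (- (p * psi t) / norm (u t))) (at t within {t..})"
proof -
  have "(norm has_derivative (\<lambda>h. inner h (sgn (u t)))) (at (u t) within u ` {t..})"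
    using has_derivative_norm[OF assms(2)] by (rule has_derivative_at_withinI)
  from vector_derivative_diff_chain_within[OF Zder[OF assms(1)] this]
  have "(norm \<circ> u has_vector_derivative inner (- Z t) (sgn (u t))) (at t within {t..})" .
  moreover have "inner (- Z t) (sgn (u t)) = - (p * psi t) / norm (u t)"
    using euler_u[OF assms(1)] by (simp add: sgn_div_norm inner_commute divide_inverse mult.commute)
  ultimately show ?thesis by (simp add: has_real_derivative_iff_has_vector_derivative o_def)
qed

lemma d_powr:
  assumes "t > 0" "u t \<noteq> 0"
  shows "((\<lambda>r. norm (u r) powr q) has_real_derivative
           q * norm (u t) powr (q - 1) * (- (p * psi t) / norm (u t))) (at t within {t..})"
  using DERIV_chain2[OF has_real_derivative_powr d_norm[OF assms], of q] assms by simp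

lemma d_ln:
  assumes "t > 0" "u t \<noteq> 0"
  shows "((\<lambda>r. ln (norm (u r))) has_real_derivative
           1 / norm (u t) * (- (p * psi t) / norm (u t))) (at t within {t..})"
  using DERIV_chain2[OF DERIV_ln_divide d_norm[OF assms]] assms by simp

lemma orth_u:
  assumes t: "t \<ge> 0" and n: "n \<in> nullspace J"
  shows "inner (u t) n = 0"
proof -
  have c: "continuous_on {0..t} (\<lambda>r. inner (u r) n)"
    by (rule continuous_on_inner[OF ucont_on continuous_on_const]) simp
  have d0: "inner (- Z r) n = 0" if "r > 0" for r
    using orth[OF Zsub[OF that] n] by simp
  have "inner (u t) n \<le> inner (u 0) n"
  proof (rule dini_deriv[OF t c])
    fix x assume x: "x \<in> {0<..<t}"
    then have "x > 0" by simp
    from d_inner[OF this, of n] d0[OF this]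
    show "\<exists>D\<le>0. ((\<lambda>r. inner (u r) n) has_real_derivative D) (at x within {x..})"
      by (intro exI[of _ 0]) simp
  qed
  moreover have "- inner (u t) n \<le> - inner (u 0) n"
  proof (rule dini_deriv[of 0 t "\<lambda>r. - inner (u r) n"])
    show "continuous_on {0..t} (\<lambda>r. - inner (u r) n)" by (rule continuous_on_minus[OF c])
    fix x assume x: "x \<in> {0<..<t}"
    have "((\<lambda>r. - inner (u r) n) has_real_derivative - inner (- Z x) n) (at x within {x..})"
      using DERIV_minus[OF d_inner[of x n]] x by simp
    then show "\<exists>D\<le>0. ((\<lambda>r. - inner (u r) n) has_real_derivative D) (at x within {x..})"
      using d0[of x] x by auto
  qed (use t in simp)
  moreover have "inner (u 0) n = 0" using fH n u0 by (simp add: H0_def)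
  ultimately show ?thesis by simp
qed

lemma norm_mono:
  assumes "0 \<le> s" "s \<le> t"
  shows "norm (u t) \<le> norm (u s)"
proof -
  have "inner (u t) (u t) \<le> inner (u s) (u s)"
  proof (rule dini_deriv[OF assms(2)])
    show "continuous_on {s..t} (\<lambda>r. inner (u r) (u r))"
      by (rule continuous_on_inner[OF ucont_on ucont_on]) (use assms in auto)
    fix x assume x: "x \<in> {s<..<t}"
    then have "x > 0" using assms by auto
    then show "\<exists>D\<le>0. ((\<lambda>r. inner (u r) (u r)) has_real_derivative D) (at x within {x..})"
    proof (intro exI conjI)
      show "((\<lambda>r. inner (u r) (u r)) has_real_derivative (- 2 * (p * psi x))) (at x within {x..})"
        using d_sq[OF \<open>x > 0\<close>] .
      have "0 \<le> p * psi x" using psi_nonneg[OF \<open>x > 0\<close>] p1 by simp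
      then show "- 2 * (p * psi x) \<le> 0" by simp
    qed
  qed
  then have "(norm (u t))^2 \<le> (norm (u s))^2" by (simp add: power2_norm_eq_inner)
  then show ?thesis by (rule power2_le_imp_le) simp
qed

lemma zero_stays: "0 \<le> s \<Longrightarrow> s \<le> t \<Longrightarrow> u s = 0 \<Longrightarrow> u t = 0"
  using norm_mono[of s t] by simp

lemma u_H0: "0 \<le> t \<Longrightarrow> u t \<noteq> 0 \<Longrightarrow> u t \<in> H0 J"
  using orth_u by (auto simp: H0_def)

lemma exists_nonzero: "\<exists>t>0. u t \<noteq> 0"
proof (rule ccontr)
  assume "\<not> ?thesis"
  then have z: "\<And>t. t > 0 \<Longrightarrow> u t = 0" by auto
  have "(u \<longlongrightarrow> u 0) (at_right 0)"
    using ucont unfolding continuous_on_def at_within_Ici_at_right[symmetric] by auto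
  moreover have "(u \<longlongrightarrow> 0) (at_right 0)"
  proof (rule tendsto_eventually)
    show "eventually (\<lambda>t. u t = 0) (at_right 0)"
      using eventually_at_right_less[of "0::real"] by (rule eventually_mono) (rule z)
  qed
  ultimately have "u 0 = 0" using tendsto_unique trivial_limit_at_right_real by blast
  then show False using fH u0 by (simp add: H0_def)
qed

lemma Rayleigh_eq: "t > 0 \<Longrightarrow> u t \<noteq> 0 \<Longrightarrow>
   ereal p * J (u t) / ereal (norm (u t) powr p) = ereal (p * psi t / norm (u t) powr p)"
  using J_u[of t] by simp

definition ell where "ell = real_of_ereal (lambda1 p J)"

lemma lambda1_eq: "lambda1 p J = ereal ell" and ell_pos: "ell > 0"
proof -
  obtain t where t: "t > 0" "u t \<noteq> 0" using exists_nonzero by blast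
  have "lambda1 p J \<le> ereal p * J (u t) / ereal (norm (u t) powr p)"
    unfolding lambda1_def by (rule INF_lower) (use u_H0 t in auto)
  then have "lambda1 p J < \<infinity>" using Rayleigh_eq[OF t] by auto
  then show "lambda1 p J = ereal ell" using lam unfolding ell_def by (cases "lambda1 p J") auto
  then show "ell > 0" using lam by simp
qed

definition Lam where "Lam t = p * psi t / norm (u t) powr p"

lemma Lam_ge: assumes "t > 0" "u t \<noteq> 0" shows "ell \<le> Lam t"
proof -
  have "lambda1 p J \<le> ereal p * J (u t) / ereal (norm (u t) powr p)"
    unfolding lambda1_def by (rule INF_lower) (use u_H0 assms in auto)
  then show ?thesis using Rayleigh_eq[OF assms] lambda1_eq by (simp add: Lam_def)
qed

lemma psi_pos: assumes "t > 0" "u t \<noteq> 0" shows "psi t > 0"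
proof -
  have "0 < Lam t" using Lam_ge[OF assms] ell_pos by simp
  moreover have N: "norm (u t) powr p > 0" using assms by simp
  ultimately have "0 < p * psi t" unfolding Lam_def zero_less_divide_iff by auto
  then show ?thesis using p1 unfolding zero_less_mult_iff by auto
qed

end

context flowJ begin

lemma quot:
  assumes "t > 0"
  shows "((\<lambda>y. (1/(y-t)) *\<^sub>R (u y - u t)) \<longlongrightarrow> - Z t) (at_right t)"
proof -
  have "(u has_derivative (\<lambda>x. x *\<^sub>R (- Z t))) (at t within {t..})"
    using Zder[OF assms] by (simp add: has_vector_derivative_def)
  then have E: "((\<lambda>y. (1 / norm (y - t)) *\<^sub>R (u y - (u t + (y - t) *\<^sub>R (- Z t)))) \<longlongrightarrow> 0) (at_right t)"
    unfolding has_derivative_within at_within_Ici_at_right by blast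
  have "((\<lambda>y. (1 / norm (y - t)) *\<^sub>R (u y - (u t + (y - t) *\<^sub>R (- Z t))) - Z t) \<longlongrightarrow> 0 - Z t) (at_right t)"
    by (intro tendsto_diff E tendsto_const)
  moreover have "eventually (\<lambda>y. (1 / norm (y - t)) *\<^sub>R (u y - (u t + (y - t) *\<^sub>R (- Z t))) - Z t
       = (1/(y-t)) *\<^sub>R (u y - u t)) (at_right t)"
    using eventually_at_right_less[of t]
  proof (rule eventually_mono)
    fix y assume "t < y"
    then show "(1 / norm (y - t)) *\<^sub>R (u y - (u t + (y - t) *\<^sub>R (- Z t))) - Z t = (1/(y-t)) *\<^sub>R (u y - u t)"
      by (simp add: scaleR_diff_right scaleR_add_right)
  qed
  ultimately show ?thesis by (simp add: tendsto_cong)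
qed

lemma Z_bound:
  assumes d: "\<delta> > 0" and L: "L-lipschitz_on {\<delta>..} u" and t: "t \<ge> \<delta>"
  shows "norm (Z t) \<le> L"
proof -
  have t0: "t > 0" using d t by simp
  have "norm (- Z t) \<le> L"
  proof (rule Lim_norm_ubound[OF trivial_limit_at_right_real quot[OF t0]])
    show "\<forall>\<^sub>F y in at_right t. norm ((1/(y-t)) *\<^sub>R (u y - u t)) \<le> L"
      using eventually_at_right_less[of t]
    proof (rule eventually_mono)
      fix y assume y: "t < y"
      have "dist (u y) (u t) \<le> L * dist y t"
        using lipschitz_onD[OF L, of y t] y t by simp
      then have "norm (u y - u t) \<le> L * (y - t)" using y by (simp add: dist_norm)
      moreover have "norm ((1/(y-t)) *\<^sub>R (u y - u t)) = norm (u y - u t) / (y - t)"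
        using y by simp
      ultimately show "norm ((1/(y-t)) *\<^sub>R (u y - u t)) \<le> L" using y
        by (simp add: divide_le_eq)
    qed
  qed
  then show ?thesis by simp
qed

lemma psi_lip:
  assumes d: "\<delta> > 0" and L: "L-lipschitz_on {\<delta>..} u"
  shows "(L*L)-lipschitz_on {\<delta>..} psi"
proof (rule lipschitz_onI)
  show "0 \<le> L * L" by simp
  fix r s assume r: "r \<in> {\<delta>..}" and s: "s \<in> {\<delta>..}"
  have r0: "r > 0" and s0: "s > 0" using r s d by auto
  have L0: "0 \<le> L" using lipschitz_on_nonneg[OF L] .
  have du: "norm (u r - u s) \<le> L * dist r s"
    using lipschitz_onD[OF L r s] by (simp add: dist_norm)
  have "psi r + inner (Z r) (u s - u r) \<le> psi s"
    by (rule subgrad_real[OF Zsub[OF r0] J_u[OF r0] J_u[OF s0]])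
  moreover have "psi s + inner (Z s) (u r - u s) \<le> psi r"
    by (rule subgrad_real[OF Zsub[OF s0] J_u[OF s0] J_u[OF r0]])
  moreover have "\<bar>inner (Z r) (u s - u r)\<bar> \<le> L * (L * dist r s)"
  proof -
    have "\<bar>inner (Z r) (u s - u r)\<bar> \<le> norm (Z r) * norm (u s - u r)" by (rule Cauchy_Schwarz_ineq2)
    also have "\<dots> \<le> L * (L * dist r s)"
      using Z_bound[OF d L, of r] r du L0 by (intro mult_mono) (auto simp: norm_minus_commute)
    finally show ?thesis .
  qed
  moreover have "\<bar>inner (Z s) (u r - u s)\<bar> \<le> L * (L * dist r s)"
  proof -
    have "\<bar>inner (Z s) (u r - u s)\<bar> \<le> norm (Z s) * norm (u r - u s)" by (rule Cauchy_Schwarz_ineq2)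
    also have "\<dots> \<le> L * (L * dist r s)"
      using Z_bound[OF d L, of s] s du L0 by (intro mult_mono) auto
    finally show ?thesis .
  qed
  ultimately show "dist (psi r) (psi s) \<le> L * L * dist r s"
    by (simp add: dist_real_def abs_le_iff)
qed

lemma psi_cont: "0 < a \<Longrightarrow> continuous_on {a..b} psi"
proof -
  assume a: "0 < a"
  obtain L where "L-lipschitz_on {a..} u" using lip[OF a] by blast
  from lipschitz_on_continuous_on[OF psi_lip[OF a this]]
  show ?thesis by (rule continuous_on_subset) auto
qed

definition NN where "NN r = norm (u r) powr (2 - p)"

lemma NN_cont: "0 \<le> a \<Longrightarrow> continuous_on {a..b} NN"
  unfolding NN_def
  by (rule continuous_on_powr'[OF continuous_on_norm[OF ucont_on] continuous_on_const]) (use p2 in auto)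

lemma d_NN:
  assumes "t > 0" "u t \<noteq> 0"
  shows "(NN has_real_derivative (- (2 - p) * Lam t)) (at t within {t..})"
proof -
  have D: "(NN has_real_derivative
      (2 - p) * norm (u t) powr (2 - p - 1) * (- (p * psi t) / norm (u t))) (at t within {t..})"
    unfolding NN_def by (rule d_powr[OF assms])
  have n: "norm (u t) > 0" using assms by simp
  have "norm (u t) powr (2 - p - 1) = norm (u t) / norm (u t) powr p"
    using n by (simp add: powr_diff)
  then have "(2 - p) * norm (u t) powr (2 - p - 1) * (- (p * psi t) / norm (u t)) = - (2 - p) * Lam t"
    using n by (simp add: Lam_def field_simps)
  then show ?thesis using D by simp
qed

lemma NN_lower:
  assumes ab: "0 \<le> a" "a \<le> b" and nz: "\<And>r. r \<in> {a<..<b} \<Longrightarrow> u r \<noteq> 0"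
    and c: "\<And>r. r \<in> {a<..<b} \<Longrightarrow> c \<le> Lam r"
  shows "NN b + (2 - p) * c * b \<le> NN a + (2 - p) * c * a"
proof (rule dini_deriv[OF ab(2)])
  show "continuous_on {a..b} (\<lambda>r. NN r + (2 - p) * c * r)"
    by (intro continuous_on_add NN_cont ab continuous_on_mult continuous_on_const continuous_on_id)
  fix x assume x: "x \<in> {a<..<b}"
  then have x0: "x > 0" using ab by auto
  have "((\<lambda>r. NN r + (2 - p) * c * r) has_real_derivative (- (2 - p) * Lam x + (2 - p) * c)) (at x within {x..})"
    using d_NN[OF x0 nz[OF x]] by (auto intro!: derivative_eq_intros)
  moreover have "- (2 - p) * Lam x + (2 - p) * c \<le> 0"
  proof -
    have "0 \<le> (2 - p) * (Lam x - c)" using c[OF x] p2 by simp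
    then show ?thesis by (simp add: algebra_simps)
  qed
  ultimately show "\<exists>D\<le>0. ((\<lambda>r. NN r + (2 - p) * c * r) has_real_derivative D) (at x within {x..})"
    by blast
qed

lemma NN_upper:
  assumes ab: "0 \<le> a" "a \<le> b" and nz: "\<And>r. r \<in> {a<..<b} \<Longrightarrow> u r \<noteq> 0"
    and c: "\<And>r. r \<in> {a<..<b} \<Longrightarrow> Lam r \<le> c"
  shows "- NN b - (2 - p) * c * b \<le> - NN a - (2 - p) * c * a"
proof (rule dini_deriv[OF ab(2)])
  show "continuous_on {a..b} (\<lambda>r. - NN r - (2 - p) * c * r)"
    by (intro continuous_on_diff continuous_on_minus NN_cont ab continuous_on_mult continuous_on_const continuous_on_id)
  fix x assume x: "x \<in> {a<..<b}"
  then have x0: "x > 0" using ab by auto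
  have "((\<lambda>r. - NN r - (2 - p) * c * r) has_real_derivative (- (- (2 - p) * Lam x) - (2 - p) * c)) (at x within {x..})"
    using d_NN[OF x0 nz[OF x]] by (auto intro!: derivative_eq_intros)
  moreover have "- (- (2 - p) * Lam x) - (2 - p) * c \<le> 0"
  proof -
    have "0 \<le> (2 - p) * (c - Lam x)" using c[OF x] p2 by simp
    then show ?thesis by (simp add: algebra_simps)
  qed
  ultimately show "\<exists>D\<le>0. ((\<lambda>r. - NN r - (2 - p) * c * r) has_real_derivative D) (at x within {x..})"
    by blast
qed

lemma extinct: "\<exists>t>0. u t = 0"
proof (rule ccontr)
  assume "\<not> ?thesis"
  then have nz: "\<And>t. t > 0 \<Longrightarrow> u t \<noteq> 0" by auto
  define R where "R = NN 0 / ((2 - p) * ell) + 1"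
  have pe: "(2 - p) * ell > 0" using p2 ell_pos by simp
  have N0: "NN 0 \<ge> 0" unfolding NN_def by simp
  then have "NN 0 / ((2 - p) * ell) \<ge> 0" using pe by simp
  then have R0: "R > 0" by (simp add: R_def)
  have "NN R + (2 - p) * ell * R \<le> NN 0 + (2 - p) * ell * 0"
    by (rule NN_lower) (use R0 nz Lam_ge in auto)
  moreover have "NN R \<ge> 0" unfolding NN_def by simp
  moreover have "(2 - p) * ell * R = NN 0 + (2 - p) * ell"
  proof -
    have nz: "(2 - p) * ell \<noteq> 0" using pe by linarith
    have "(2 - p) * ell * (NN 0 / ((2 - p) * ell)) = NN 0"
      by (simp only: times_divide_eq_right) (rule nonzero_mult_div_cancel_left[OF nz])
    then show ?thesis by (simp add: R_def distrib_left)
  qed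
  ultimately show False using pe by simp
qed

end

context flowJ begin

lemma ext_ne: "extinction_times u \<noteq> {}"
proof -
  obtain t0 where t0: "t0 > 0" "u t0 = 0" using extinct by blast
  then have "t0 \<in> extinction_times u"
    unfolding extinction_times_def using zero_stays[of t0] by auto
  then show ?thesis by blast
qed

lemma ext_bdd: "bdd_below (extinction_times u)"
  unfolding bdd_below_def extinction_times_def by (rule exI[of _ 0]) auto

lemma T_nonneg: "0 \<le> T_ex u"
  unfolding T_ex_def using ext_ne by (intro cInf_greatest) (auto simp: extinction_times_def)

lemma nonzero_before: assumes "0 < t" "t < T_ex u" shows "u t \<noteq> 0"
proof
  assume "u t = 0"
  then have "t \<in> extinction_times u"
    unfolding extinction_times_def using zero_stays[of t] assms by auto
  then have "T_ex u \<le> t" unfolding T_ex_def using ext_bdd by (rule cInf_lower)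
  then show False using assms by simp
qed

lemma zero_after: assumes "T_ex u < y" shows "u y = 0"
proof -
  obtain e where e: "e \<in> extinction_times u" "e < y"
    using assms ext_ne ext_bdd unfolding T_ex_def by (auto simp: cInf_less_iff)
  then show ?thesis by (auto simp: extinction_times_def)
qed

lemma u_T: "u (T_ex u) = 0"
proof -
  have "(u \<longlongrightarrow> u (T_ex u)) (at (T_ex u) within {0..})"
    using ucont T_nonneg unfolding continuous_on_def by auto
  then have "(u \<longlongrightarrow> u (T_ex u)) (at_right (T_ex u))"
    by (rule tendsto_within_subset) (use T_nonneg in auto)
  moreover have "(u \<longlongrightarrow> 0) (at_right (T_ex u))"
  proof (rule tendsto_eventually)
    show "eventually (\<lambda>y. u y = 0) (at_right (T_ex u))"
      using eventually_at_right_less[of "T_ex u"] by (rule eventually_mono) (rule zero_after)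
  qed
  ultimately show ?thesis using tendsto_unique trivial_limit_at_right_real by blast
qed

lemma freq:
  assumes x: "x > 0" and e: "e > 0"
  shows "\<exists>\<^sub>F r in at_right x. (norm (Z x))^2 - e \<le> inner (Z x) (Z r)"
proof (rule ccontr)
  define a where "a = Z x"
  assume "\<not> ?thesis"
  then have "eventually (\<lambda>r. inner a (Z r) < (norm a)^2 - e) (at_right x)"
    unfolding not_frequently a_def by (simp add: not_le)
  then obtain b where b: "b > x" and bb: "\<And>y. x < y \<Longrightarrow> y < b \<Longrightarrow> inner a (Z y) < (norm a)^2 - e"
    unfolding eventually_at_right[of x "x+1", simplified] by auto
  have "((\<lambda>y. (inner (u y) a - inner (u x) a) / (y - x)) \<longlongrightarrow> inner (- Z x) a) (at_right x)"
    using d_inner[OF x, of a] unfolding has_field_derivative_iff at_within_Ici_at_right .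
  moreover have "inner (- Z x) a = - ((norm a)^2)" by (simp add: a_def power2_norm_eq_inner)
  ultimately have "eventually (\<lambda>y. (inner (u y) a - inner (u x) a) / (y - x) < - ((norm a)^2) + e) (at_right x)"
    using e by (auto intro: order_tendstoD(2))
  moreover have "eventually (\<lambda>y. x < y \<and> y < b) (at_right x)"
    unfolding eventually_at_right[OF b] by (intro exI[of _ b]) (use b in auto)
  ultimately have "eventually (\<lambda>y. (inner (u y) a - inner (u x) a) / (y - x) < - ((norm a)^2) + e \<and> x < y \<and> y < b) (at_right x)"
    by (rule eventually_conj)
  then obtain y where y: "(inner (u y) a - inner (u x) a) / (y - x) < - ((norm a)^2) + e" "x < y" "y < b"
    using eventually_happens[of _ "at_right x"] trivial_limit_at_right_real by blast
  have "- inner (u y) a - ((norm a)^2 - e) * y \<le> - inner (u x) a - ((norm a)^2 - e) * x"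
  proof (rule dini_deriv[of x y "\<lambda>r. - inner (u r) a - ((norm a)^2 - e) * r"])
    show "x \<le> y" using y by simp
    show "continuous_on {x..y} (\<lambda>r. - inner (u r) a - ((norm a)^2 - e) * r)"
      by (intro continuous_on_diff continuous_on_minus continuous_on_inner[OF ucont_on continuous_on_const]
          continuous_on_mult continuous_on_const continuous_on_id) (use x in simp)
    fix r assume r: "r \<in> {x<..<y}"
    then have r0: "r > 0" using x by simp
    have "((\<lambda>r. - inner (u r) a - ((norm a)^2 - e) * r) has_real_derivative
        (- inner (- Z r) a - ((norm a)^2 - e))) (at r within {r..})"
      using d_inner[OF r0, of a] by (auto intro!: derivative_eq_intros)
    moreover have "- inner (- Z r) a - ((norm a)^2 - e) \<le> 0"
      using bb[of r] r y by (simp add: inner_commute)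
    ultimately show "\<exists>D\<le>0. ((\<lambda>r. - inner (u r) a - ((norm a)^2 - e) * r) has_real_derivative D) (at r within {r..})"
      by blast
  qed
  then have "- ((norm a)^2 - e) * (y - x) \<le> inner (u y) a - inner (u x) a"
    by (simp add: algebra_simps)
  then have "- ((norm a)^2 - e) \<le> (inner (u y) a - inner (u x) a) / (y - x)"
    using y by (simp add: le_divide_eq)
  then show False using y(1) by simp
qed

end

context flowJ begin

definition W where "W r = ln (psi r) - p * ln (norm (u r))"

lemma W_freq:
  assumes x: "x > 0" "u x \<noteq> 0" and e: "e > 0"
  shows "\<exists>\<^sub>F y in at_right x. W y \<le> W x + e*(y-x)"
proof -
  define a where "a = Z x"
  define P where "P = psi x"
  define N where "N = norm (u x)"
  have P0: "P > 0" using psi_pos x by (simp add: P_def)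
  have N0: "N > 0" using x by (simp add: N_def)
  obtain L where L: "L-lipschitz_on {x..} u" using lip[OF x(1)] by blast
  have L0: "0 \<le> L" using lipschitz_on_nonneg[OF L] .
  define e1 where "e1 = e / (2/P + 1)"
  have pp: "2/P + 1 > 0" using P0 by (simp add: add_pos_pos)
  have e1: "e1 > 0" using e pp by (simp add: e1_def)
  have e1e: "e1 * (2/P + 1) = e" using pp by (simp add: e1_def)
  define D where "D = 1 / N * (- (p * P) / N)"
  define q where "q y = (1/(y-x)) *\<^sub>R (u y - u x)" for y
  have F1: "\<exists>\<^sub>F y in at_right x. (norm a)^2 - e1 \<le> inner a (Z y)"
    using freq[OF x(1) e1] by (simp add: a_def)
  have E2: "eventually (\<lambda>y. norm (q y + a) < e1/(L+1)) (at_right x)"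
  proof -
    have qe: "q = (\<lambda>y. (1/(y-x)) *\<^sub>R (u y - u x))" by (rule ext) (simp add: q_def)
    have "(q \<longlongrightarrow> -a) (at_right x)" using quot[OF x(1)] unfolding qe a_def .
    moreover have "e1/(L+1) > 0" using e1 L0 by simp
    ultimately have "eventually (\<lambda>y. dist (q y) (-a) < e1/(L+1)) (at_right x)"
      by (rule tendstoD)
    then show ?thesis by (simp add: dist_norm)
  qed
  have E3: "eventually (\<lambda>y. D - e1/p < (ln (norm (u y)) - ln N)/(y-x)) (at_right x)"
  proof -
    have "((\<lambda>y. (ln (norm (u y)) - ln N)/(y-x)) \<longlongrightarrow> D) (at_right x)"
      using d_ln[OF x] unfolding has_field_derivative_iff at_within_Ici_at_right
      by (simp add: D_def N_def P_def)
    moreover have "D - e1/p < D" using e1 p1 by simp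
    ultimately show ?thesis by (rule order_tendstoD(1))
  qed
  have E4: "eventually (\<lambda>y. x < y) (at_right x)" by (simp add: eventually_at_right_less)
  have E5: "eventually (\<lambda>y. u y \<noteq> 0) (at_right x)"
  proof -
    have "(u \<longlongrightarrow> u x) (at x within {0..})"
      using ucont x(1) unfolding continuous_on_def by auto
    then have "(u \<longlongrightarrow> u x) (at_right x)"
      by (rule tendsto_within_subset) (use x(1) in auto)
    then show ?thesis using x(2) by (rule tendsto_imp_eventually_ne)
  qed
  have E: "eventually (\<lambda>y. norm (q y + a) < e1/(L+1) \<and> D - e1/p < (ln (norm (u y)) - ln N)/(y-x)
      \<and> x < y \<and> u y \<noteq> 0) (at_right x)"
    using E2 E3 E4 E5 by eventually_elim auto
  from frequently_eventually_frequently[OF F1 E]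
  show ?thesis
  proof (rule frequently_elim1)
    fix y assume H: "(norm a)^2 - e1 \<le> inner a (Z y) \<and> (norm (q y + a) < e1/(L+1) \<and>
      D - e1/p < (ln (norm (u y)) - ln N)/(y-x) \<and> x < y \<and> u y \<noteq> 0)"
    then have H1: "(norm a)^2 - e1 \<le> inner a (Z y)" and H2: "norm (q y + a) < e1/(L+1)"
      and H3: "D - e1/p < (ln (norm (u y)) - ln N)/(y-x)" and xy: "x < y" and uy: "u y \<noteq> 0"
      by auto
    define h where "h = y - x"
    have h0: "h > 0" using xy by (simp add: h_def)
    have y0: "y > 0" using xy x by simp
    have Py: "psi y > 0" using psi_pos[OF y0 uy] .
    have ZyL: "norm (Z y) \<le> L" using Z_bound[OF x(1) L, of y] xy by simp
    have s1: "psi y + inner (Z y) (u x - u y) \<le> P"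
      unfolding P_def by (rule subgrad_real[OF Zsub[OF y0] J_u[OF y0] J_u[OF x(1)]])
    have uq: "u y - u x = h *\<^sub>R q y" using h0 by (simp add: q_def h_def)
    have s2: "inner (Z y) (u y - u x) = h * (- inner a (Z y) + inner (Z y) (q y + a))"
      by (simp add: uq inner_add_right inner_commute algebra_simps)
    have s3: "inner (Z y) (q y + a) \<le> e1"
    proof -
      have "inner (Z y) (q y + a) \<le> norm (Z y) * norm (q y + a)" by (rule norm_cauchy_schwarz)
      also have "\<dots> \<le> L * (e1/(L+1))"
        using ZyL H2 L0 by (intro mult_mono) auto
      also have "\<dots> \<le> e1"
        using L0 e1 by (simp add: field_simps)
      finally show ?thesis .
    qed
    have s4: "psi y - P \<le> h * (- ((norm a)^2) + 2*e1)"
    proof -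
      have "- inner a (Z y) + inner (Z y) (q y + a) \<le> - ((norm a)^2) + 2*e1" using H1 s3 by simp
      then have "h * (- inner a (Z y) + inner (Z y) (q y + a)) \<le> h * (- ((norm a)^2) + 2*e1)"
        using h0 by (intro mult_left_mono) auto
      moreover have "inner (Z y) (u x - u y) = - inner (Z y) (u y - u x)"
        by (simp add: inner_diff_right)
      ultimately show ?thesis using s1 s2 by simp
    qed
    have s5: "ln (psi y) - ln P \<le> (psi y - P) / P"
    proof -
      have "ln (psi y / P) \<le> psi y / P - 1" using Py P0 by (intro ln_le_minus_one) simp
      then show ?thesis using Py P0 by (simp add: ln_div diff_divide_distrib)
    qed
    have s6: "ln (psi y) - ln P \<le> h * (- ((norm a)^2) + 2*e1) / P"
      using s5 divide_right_mono[OF s4, of P] P0 by simp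
    have s7: "- p * (ln (norm (u y)) - ln N) \<le> h * (- p * D + e1)"
    proof -
      have "h * (D - e1/p) \<le> h * ((ln (norm (u y)) - ln N)/(y-x))"
        using H3 h0 by (intro mult_left_mono) auto
      also have "h * ((ln (norm (u y)) - ln N)/(y-x)) = ln (norm (u y)) - ln N"
        using h0 by (simp add: h_def)
      finally have "h * (D - e1/p) \<le> ln (norm (u y)) - ln N" .
      then have "- p * (ln (norm (u y)) - ln N) \<le> - p * (h * (D - e1/p))"
        using p1 by (intro mult_left_mono_neg) auto
      also have "- p * (h * (D - e1/p)) = h * (- p * D + e1)"
        using p1 by (simp add: algebra_simps)
      finally show ?thesis .
    qed
    have CS: "p * p * P / N^2 \<le> (norm a)^2 / P"
    proof -
      have eu: "inner a (u x) = p * P" using euler_u[OF x(1)] by (simp add: a_def P_def)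
      have "(inner a (u x))^2 \<le> inner a a * inner (u x) (u x)" by (rule Cauchy_Schwarz_ineq)
      then have "(p * P)^2 \<le> (norm a)^2 * N^2" using eu by (simp add: N_def power2_norm_eq_inner)
      then have "(p * P)^2 / (P * N^2) \<le> (norm a)^2 * N^2 / (P * N^2)"
        using P0 N0 by (intro divide_right_mono) auto
      then show ?thesis using P0 N0 by (simp add: power2_eq_square field_simps)
    qed
    have mD: "- p * D = p * p * P / N^2" using N0 by (simp add: D_def power2_eq_square)
    have "W y - W x = (ln (psi y) - ln P) + (- p * (ln (norm (u y)) - ln N))"
      by (simp add: W_def P_def N_def algebra_simps)
    also have "\<dots> \<le> h * (- ((norm a)^2) + 2*e1) / P + h * (p * p * P / N^2 + e1)"
    proof -
      have "h * (- p * D + e1) = h * (p * p * P / N^2 + e1)" using mD by simp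
      then show ?thesis using s6 s7 by linarith
    qed
    also have "\<dots> \<le> h * (- ((norm a)^2) + 2*e1) / P + h * ((norm a)^2 / P + e1)"
      using CS h0 by (intro add_left_mono mult_left_mono) auto
    also have "\<dots> = h * (e1 * (2/P + 1))"
      using P0 by (simp add: field_simps)
    also have "\<dots> = e * (y - x)" using e1e by (simp add: h_def)
    finally show "W y \<le> W x + e * (y - x)" by simp
  qed
qed

lemma Lam_W: "r > 0 \<Longrightarrow> u r \<noteq> 0 \<Longrightarrow> Lam r = p * exp (W r)"
  using psi_pos[of r] by (simp add: Lam_def W_def exp_diff powr_def)

lemma Lam_mono:
  assumes s: "0 < s" "s \<le> t" and nz: "\<And>r. s \<le> r \<Longrightarrow> r \<le> t \<Longrightarrow> u r \<noteq> 0"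
  shows "Lam t \<le> Lam s"
proof -
  have "W t \<le> W s"
  proof (rule dini_open[OF s(2)])
    have pnz: "psi r \<noteq> 0" if r: "r \<in> {s..t}" for r
    proof -
      have "r > 0" "u r \<noteq> 0" using r s nz by auto
      then show ?thesis using psi_pos by force
    qed
    have c1: "continuous_on {s..t} (\<lambda>r. ln (psi r))"
      by (rule continuous_on_ln[OF psi_cont[OF s(1)]]) (use pnz in blast)
    have c2: "continuous_on {s..t} (\<lambda>r. ln (norm (u r)))"
      by (rule continuous_on_ln[OF continuous_on_norm[OF ucont_on]]) (use nz s in auto)
    show "continuous_on {s..t} W"
      unfolding W_def by (intro continuous_on_diff c1 continuous_on_mult continuous_on_const c2)
    fix x e :: real assume x: "x \<in> {s<..<t}" and e: "e > 0"
    show "\<exists>\<^sub>F y in at_right x. W y \<le> W x + e * (y - x)"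
      by (rule W_freq) (use x s nz e in auto)
  qed
  then show ?thesis using Lam_W[of t] Lam_W[of s] s nz p1 by simp
qed

end

theorem corollary4:
  fixes J :: "'a::{real_inner, complete_space} \<Rightarrow> ereal"
    and p :: real and f :: 'a and u :: "real \<Rightarrow> 'a"
  assumes p: "1 \<le> p" "p < 2"
    and conv: "convex_fun J" and lsc: "lsc_fun J" and proper: "proper_fun J"
    and dense: "closure (eff_dom J) = UNIV"
    and hom: "abs_homogeneous p J"
    and coerc: "lambda1 p J > 0"
    and f: "f \<in> H0 J"
    and flow: "gradient_flow J f u"
  shows "extinction_times u \<noteq> {} \<and>
    (\<forall>t. 0 < t \<and> t < T_ex u \<longrightarrow>
       ereal (2 - p) * lambda1 p J * ereal (T_ex u - t) \<le> ereal (norm (u t) powr (2 - p)) \<and>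
       ereal (norm (u t) powr (2 - p)) \<le> ereal (2 - p) * Rayleigh p J u t * ereal (T_ex u - t))"
proof -
  have uc: "continuous_on {0..} u" and ul: "\<And>\<delta>. \<delta> > 0 \<Longrightarrow> \<exists>L. L-lipschitz_on {\<delta>..} u"
    and u0: "u 0 = f"
    and ex: "\<forall>t>0. \<exists>\<zeta>. \<zeta> \<in> subdiff J (u t) \<and> (u has_vector_derivative (- \<zeta>)) (at t within {t..})"
    using flow unfolding gradient_flow_def by blast+
  have "\<forall>t. \<exists>\<zeta>. t > 0 \<longrightarrow> \<zeta> \<in> subdiff J (u t) \<and> (u has_vector_derivative (- \<zeta>)) (at t within {t..})"
    using ex by blast
  then obtain Z where Z: "\<And>t. t > 0 \<Longrightarrow> Z t \<in> subdiff J (u t) \<and> (u has_vector_derivative (- Z t)) (at t within {t..})"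
    by (metis choice)
  have "flowJ J p u Z f"
    unfolding flowJ_def homJ_def flowJ_axioms_def
    using p conv proper hom coerc f u0 uc ul Z by blast
  then interpret F: flowJ J p u Z f .
  show ?thesis
  proof (intro conjI allI impI)
    show "extinction_times u \<noteq> {}" by (rule F.ext_ne)
    fix t assume t: "0 < t \<and> t < T_ex u"
    define T where "T = T_ex u"
    have tT: "0 < t" "t < T" using t by (auto simp: T_def)
    have NT: "F.NN T = 0" using F.u_T by (simp add: F.NN_def T_def)
    have nz: "\<And>r. t \<le> r \<Longrightarrow> r < T \<Longrightarrow> u r \<noteq> 0"
      using F.nonzero_before tT by (auto simp: T_def)
    have low: "F.NN T + (2 - p) * F.ell * T \<le> F.NN t + (2 - p) * F.ell * t"
      by (rule F.NN_lower) (use tT nz F.Lam_ge in auto)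
    have "(2 - p) * F.ell * (T - t) \<le> F.NN t" using low NT by (simp add: algebra_simps)
    then show "ereal (2 - p) * lambda1 p J * ereal (T_ex u - t) \<le> ereal (norm (u t) powr (2 - p))"
      by (simp add: F.lambda1_eq T_def F.NN_def)
    have mono: "F.Lam r \<le> F.Lam t" if r: "r \<in> {t<..<T}" for r
      by (rule F.Lam_mono) (use r tT nz in auto)
    have up: "- F.NN T - (2 - p) * F.Lam t * T \<le> - F.NN t - (2 - p) * F.Lam t * t"
      by (rule F.NN_upper) (use tT nz mono in auto)
    have "F.NN t \<le> (2 - p) * F.Lam t * (T - t)" using up NT by (simp add: algebra_simps)
    moreover have "Rayleigh p J u t = ereal (F.Lam t)"
      unfolding Rayleigh_def F.Lam_def using F.Rayleigh_eq[of t] tT nz by simp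
    ultimately show "ereal (norm (u t) powr (2 - p)) \<le> ereal (2 - p) * Rayleigh p J u t * ereal (T_ex u - t)"
      by (simp add: T_def F.NN_def)
  qed
qed

end
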